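(* Assume the standing assumptions in the context. Let $S\subsetneq S^*$ and $k=|S|$. Then $$\max_{i\in[d]\setminus S}|Z_i^S|\ \ge\ \sqrt{\frac{\rho^3}{L}}\,\frac{1}{\sqrt{s^*-k}}\,\|\beta^*-\beta^S\|_2\ \ge\ \sqrt{\frac{\rho^3}{L}}\,\frac{1}{\sqrt{s^*-k}}\,\|\beta^*_{S^*\setminus S}\|_2.$$
   Context: Standing assumptions: $(x,y)$ random with $x\in\mathbb{R}^d$, $y\in\mathbb{R}$; $\mathbb{E}[x]=0$; $y=\langle\beta^*,x\rangle+\epsilon$ with $\mathbb{E}[\epsilon\mid x]=0$; $S^*=\mathrm{supp}(\beta^* )$, $s^*=|S^*|$; $\Sigma$ the covariance of $x$, $\Sigma_F$ its principal submatrix on $F$; there are $0<\rho\le L$ with all eigenvalues of $\Sigma_F$ in $[\rho,L]$ for all $|F|=s^*$; for $|F|=s^*$, $\mu_F:=\max_{j\notin F}\|\Sigma_F^{-1}\mathrm{Cov}(x_F,x_j)\|_1<1$; $|y|<1$ and $\|x\|_\infty<M$ almost surely. $\mathcal{R}(\beta)=\mathbb{E}[(y-\langle x,\beta\rangle)^2]$, $\beta^S=\arg\min_{\mathrm{supp}(\beta)\subseteq S}\mathcal{R}(\beta)$, $Z_i^S=\mathbb{E}[x_i(y-\langle x,\beta^S\rangle)]$. For a vector $v$ and $F\subseteq[d]$, $v_F$ is its restriction to coordinates in $F$. *)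

theory Defs
  imports "HOL-Probability.Probability"
begin

text \<open>Vectors in R^d are modelled as functions nat => real, where only the
coordinates 0..d-1 are meaningful. The random vector x is X :: 'w => nat => real
on a probability space M, the response y is Y :: 'w => real.\<close>

definition supp :: "(nat \<Rightarrow> real) \<Rightarrow> nat set" where
  "supp v = {i. v i \<noteq> 0}"

definition inner_d :: "nat \<Rightarrow> (nat \<Rightarrow> real) \<Rightarrow> (nat \<Rightarrow> real) \<Rightarrow> real" where
  "inner_d d u v = (\<Sum>i<d. u i * v i)"

definition norm2_on :: "nat set \<Rightarrow> (nat \<Rightarrow> real) \<Rightarrow> real" where
  "norm2_on A v = sqrt (\<Sum>i\<in>A. (v i)\<^sup>2)"

definition gen_sigma :: "'w measure \<Rightarrow> nat \<Rightarrow> ('w \<Rightarrow> nat \<Rightarrow> real) \<Rightarrow> 'w measure" where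
  "gen_sigma M d X = sigma (space M)
     {{\<omega> \<in> space M. X \<omega> i \<in> B} | i B. i < d \<and> B \<in> sets borel}"

definition covx :: "'w measure \<Rightarrow> ('w \<Rightarrow> nat \<Rightarrow> real) \<Rightarrow> nat \<Rightarrow> nat \<Rightarrow> real" where
  "covx M X i j = (\<integral>\<omega>. (X \<omega> i - (\<integral>\<eta>. X \<eta> i \<partial>M)) * (X \<omega> j - (\<integral>\<eta>. X \<eta> j \<partial>M)) \<partial>M)"

definition sub_eigenvalue :: "(nat \<Rightarrow> nat \<Rightarrow> real) \<Rightarrow> nat set \<Rightarrow> real \<Rightarrow> bool" where
  "sub_eigenvalue Sig F mu \<longleftrightarrow>
     (\<exists>v. supp v \<subseteq> F \<and> v \<noteq> (\<lambda>_. 0) \<and> (\<forall>i\<in>F. (\<Sum>k\<in>F. Sig i k * v k) = mu * v i))"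

definition sub_solve :: "(nat \<Rightarrow> nat \<Rightarrow> real) \<Rightarrow> nat set \<Rightarrow> (nat \<Rightarrow> real) \<Rightarrow> (nat \<Rightarrow> real)" where
  "sub_solve Sig F c = (THE w. supp w \<subseteq> F \<and> (\<forall>i\<in>F. (\<Sum>k\<in>F. Sig i k * w k) = c i))"

definition mu_F :: "nat \<Rightarrow> (nat \<Rightarrow> nat \<Rightarrow> real) \<Rightarrow> nat set \<Rightarrow> real" where
  "mu_F d Sig F = Max ((\<lambda>j. \<Sum>i\<in>F. \<bar>sub_solve Sig F (\<lambda>i. Sig i j) i\<bar>) ` ({..<d} - F))"

definition risk :: "'w measure \<Rightarrow> nat \<Rightarrow> ('w \<Rightarrow> nat \<Rightarrow> real) \<Rightarrow> ('w \<Rightarrow> real) \<Rightarrow> (nat \<Rightarrow> real) \<Rightarrow> real" where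
  "risk M d X Y b = (\<integral>\<omega>. (Y \<omega> - inner_d d (X \<omega>) b)\<^sup>2 \<partial>M)"

definition betaS :: "'w measure \<Rightarrow> nat \<Rightarrow> ('w \<Rightarrow> nat \<Rightarrow> real) \<Rightarrow> ('w \<Rightarrow> real) \<Rightarrow> nat set \<Rightarrow> (nat \<Rightarrow> real)" where
  "betaS M d X Y S = arg_min (risk M d X Y) (\<lambda>b. supp b \<subseteq> S)"

definition Zs :: "'w measure \<Rightarrow> nat \<Rightarrow> ('w \<Rightarrow> nat \<Rightarrow> real) \<Rightarrow> ('w \<Rightarrow> real) \<Rightarrow> nat set \<Rightarrow> nat \<Rightarrow> real" where
  "Zs M d X Y S i = (\<integral>\<omega>. X \<omega> i * (Y \<omega> - inner_d d (X \<omega>) (betaS M d X Y S)) \<partial>M)"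

end

theory Submission
  imports Defs
begin


definition qf :: "(nat \<Rightarrow> nat \<Rightarrow> real) \<Rightarrow> nat set \<Rightarrow> (nat \<Rightarrow> real) \<Rightarrow> real" where
  "qf A F v = (\<Sum>i\<in>F. \<Sum>j\<in>F. v i * A i j * v j)"

lemma box_compact:
  "compact (PiE UNIV (\<lambda>i. if i \<in> F then {-R..R} else {0::real}))"
proof -
  have "compactin (product_topology (\<lambda>i. euclidean) UNIV)
     (PiE UNIV (\<lambda>i. if i \<in> F then {-R..R} else {0::real}))"
    by (subst compactin_PiE) auto
  then show ?thesis by (simp add: euclidean_product_topology)
qed

lemma cont_coord: "continuous_on S (\<lambda>x::nat\<Rightarrow>real. x i)"
  by (rule continuous_on_subset[OF continuous_on_product_coordinates]) auto

lemma qf_cont: "continuous_on S (qf A F)"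
  unfolding qf_def by (intro continuous_intros cont_coord)

lemma aux: "(x::real) > 0 \<Longrightarrow> x * c / (4*x^2) = c/(4*x)"
  by (simp add: power2_eq_square field_simps)

lemma quad1:
  fixes a b :: real
  assumes "\<And>t. a * t + b * t^2 \<ge> 0"
  shows "a = 0"
proof (rule ccontr)
  assume a: "a \<noteq> 0"
  define t where "t = - a / (2 * (\<bar>b\<bar> + 1))"
  have p: "\<bar>b\<bar> + 1 > 0" by simp
  have "a * t + b * t^2 = (- (a^2 / (2*(\<bar>b\<bar>+1)))) + b * a^2 / (4*(\<bar>b\<bar>+1)^2)"
    unfolding t_def by (simp add: power2_eq_square field_simps)
  also have "b * a^2 / (4*(\<bar>b\<bar>+1)^2) \<le> a^2 / (4*(\<bar>b\<bar>+1))"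
  proof -
    have "b * a^2 \<le> (\<bar>b\<bar>+1) * a^2" by (intro mult_right_mono) auto
    hence "b * a^2 / (4*(\<bar>b\<bar>+1)^2) \<le> (\<bar>b\<bar>+1) * a^2 / (4*(\<bar>b\<bar>+1)^2)"
      by (intro divide_right_mono) auto
    also have "\<dots> = a^2 / (4*(\<bar>b\<bar>+1))" using p aux[of "\<bar>b\<bar>+1" "a^2"] by simp
    finally show ?thesis .
  qed
  hence "(- (a^2 / (2*(\<bar>b\<bar>+1)))) + b * a^2 / (4*(\<bar>b\<bar>+1)^2) \<le> - (a^2 / (4*(\<bar>b\<bar>+1)))"
  proof -
    have "a^2 / (2*(\<bar>b\<bar>+1)) = 2 * (a^2 / (4*(\<bar>b\<bar>+1)))" using p by (simp add: field_simps)
    thus ?thesis using \<open>b * a^2 / (4*(\<bar>b\<bar>+1)^2) \<le> a^2 / (4*(\<bar>b\<bar>+1))\<close> by (smt (verit))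
  qed
  also have "\<dots> < 0" using a p by simp
  finally show False using assms[of t] by simp
qed

lemma qf_expand:
  assumes sym: "\<And>i j. A i j = A j i"
  shows "qf A F (\<lambda>i. v i + t * u i) = qf A F v + 2 * t * (\<Sum>i\<in>F. u i * (\<Sum>j\<in>F. A i j * v j)) + t^2 * qf A F u"
proof -
  have "qf A F (\<lambda>i. v i + t * u i) = qf A F v + t * (\<Sum>i\<in>F. \<Sum>j\<in>F. u i * A i j * v j)
      + t * (\<Sum>i\<in>F. \<Sum>j\<in>F. v i * A i j * u j) + t^2 * qf A F u"
    unfolding qf_def
    by (simp add: algebra_simps power2_eq_square sum.distrib sum_distrib_left)
  moreover have "(\<Sum>i\<in>F. \<Sum>j\<in>F. v i * A i j * u j) = (\<Sum>i\<in>F. \<Sum>j\<in>F. u i * A i j * v j)"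
    by (subst sum.swap) (simp add: sym mult_ac)
  moreover have "(\<Sum>i\<in>F. \<Sum>j\<in>F. u i * A i j * v j) = (\<Sum>i\<in>F. u i * (\<Sum>j\<in>F. A i j * v j))"
    by (simp add: sum_distrib_left mult_ac)
  ultimately show ?thesis by simp
qed

lemma qf_scale: "qf A F (\<lambda>i. c * w i) = c^2 * qf A F w"
  unfolding qf_def by (simp add: sum_distrib_left power2_eq_square mult_ac)

lemma qf_zero: "(\<And>i. i \<in> F \<Longrightarrow> w i = 0) \<Longrightarrow> qf A F w = 0"
  unfolding qf_def by simp

lemma hquad: fixes l q t a b c z :: real
  shows "l + 2*t*a + t^2*q \<ge> l*(1 + 2*t*b + t^2*c) \<Longrightarrow> z = a - l*b \<Longrightarrow> 2*z*t + (q - l*c)*t^2 \<ge> 0"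
proof -
  assume h: "l + 2*t*a + t^2*q \<ge> l*(1 + 2*t*b + t^2*c)" and z: "z = a - l*b"
  have "2*z*t + (q - l*c)*t^2 = (l + 2*t*a + t^2*q) - l*(1 + 2*t*b + t^2*c)"
    unfolding z by (simp add: algebra_simps)
  thus ?thesis using h by linarith
qed

lemma rayleigh:
  assumes fin: "finite F" and sym: "\<And>i j. A i j = A j i"
    and eigb: "\<And>mu. sub_eigenvalue A F mu \<Longrightarrow> rho \<le> mu"
    and sv: "supp v \<subseteq> F"
  shows "qf A F v \<ge> rho * (\<Sum>i\<in>F. (v i)^2)"
proof (cases "F = {}")
  case True
  then show ?thesis by (simp add: qf_def)
next
  case False
  then obtain i0 where i0: "i0 \<in> F" by auto
  define B where "B = PiE UNIV (\<lambda>i. if i \<in> F then {-1..1} else {0::real})"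
  define K where "K = B \<inter> {v. (\<Sum>i\<in>F. (v i)^2) = 1}"
  have "compact K" unfolding K_def B_def
    by (intro compact_Int_closed box_compact closed_Collect_eq continuous_intros cont_coord)
  moreover have "(\<lambda>i. if i = i0 then 1 else 0) \<in> K"
  proof -
    have e: "(\<lambda>i. (if i = i0 then 1 else 0::real)^2) = (\<lambda>i. if i = i0 then 1 else 0)" by auto
    have "(\<Sum>i\<in>F. (if i = i0 then 1 else 0::real)^2) = 1" using i0 fin by (subst e) simp
    thus ?thesis using i0 fin by (auto simp: K_def B_def)
  qed
  hence "K \<noteq> {}" by auto
  ultimately obtain v0 where v0K: "v0 \<in> K" and v0min: "\<And>y. y \<in> K \<Longrightarrow> qf A F v0 \<le> qf A F y"
    using continuous_attains_inf[of K "qf A F"] qf_cont by blast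
  define lam where "lam = qf A F v0"
  have v0out: "\<And>i. i \<notin> F \<Longrightarrow> v0 i = 0" 
  proof -
    fix i assume "i \<notin> F"
    have "v0 \<in> B" using v0K by (simp add: K_def)
    hence "v0 i \<in> (if i \<in> F then {-1..1} else {0})" unfolding B_def PiE_iff by blast
    thus "v0 i = 0" using \<open>i \<notin> F\<close> by simp
  qed
  have v01: "(\<Sum>i\<in>F. (v0 i)^2) = 1" using v0K by (auto simp: K_def)
  have claim1: "qf A F w \<ge> lam * (\<Sum>i\<in>F. (w i)^2)" if sw: "\<And>i. i \<notin> F \<Longrightarrow> w i = 0" for w
  proof -
    define n where "n = sqrt (\<Sum>i\<in>F. (w i)^2)"
    have s0: "(\<Sum>i\<in>F. (w i)^2) \<ge> 0" by (simp add: sum_nonneg)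
    show ?thesis
    proof (cases "n = 0")
      case True
      hence "(\<Sum>i\<in>F. (w i)^2) = 0" using s0 by (simp add: n_def)
      hence "\<And>i. i \<in> F \<Longrightarrow> w i = 0" using fin by (simp add: sum_nonneg_eq_0_iff)
      thus ?thesis using \<open>(\<Sum>i\<in>F. (w i)^2) = 0\<close> by (simp add: qf_zero)
    next
      case False
      hence npos: "n > 0" using s0 by (simp add: n_def)
      have n2: "n^2 = (\<Sum>i\<in>F. (w i)^2)" using s0 by (simp add: n_def)
      have "(\<lambda>i. (1/n) * w i) \<in> K"
      proof -
        have "\<bar>w i\<bar> \<le> n" if "i \<in> F" for i
        proof -
          have "(w i)^2 \<le> (\<Sum>i\<in>F. (w i)^2)"
            using that fin by (intro member_le_sum) auto
          thus ?thesis using n2 npos by (metis abs_le_square_iff abs_of_pos)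
        qed
        hence "(1/n) * w i \<in> {-1..1}" if "i \<in> F" for i
        proof -
          have "w i \<le> n" "- w i \<le> n" using that \<open>\<And>i. i \<in> F \<Longrightarrow> \<bar>w i\<bar> \<le> n\<close>[of i] by auto
          thus ?thesis using npos by (auto simp: field_simps)
        qed
        hence inB: "(\<lambda>i. (1/n) * w i) \<in> B" using sw
          by (auto simp: B_def PiE_iff simp del: atLeastAtMost_iff)
        have "(\<Sum>i\<in>F. ((1/n) * w i)^2) = (1/n)^2 * (\<Sum>i\<in>F. (w i)^2)"
          by (simp add: power_mult_distrib sum_distrib_left power_divide)
        also have "\<dots> = 1" using n2 npos by (simp add: power_divide flip: n2)
        finally show ?thesis using inB by (simp add: K_def)
      qed
      hence "lam \<le> (1/n)^2 * qf A F w" using v0min[of "(\<lambda>i. (1/n) * w i)"] unfolding lam_def qf_scale by blast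
      hence "n^2 * lam \<le> n^2 * ((1/n)^2 * qf A F w)" using npos by (intro mult_left_mono) auto
      also have "\<dots> = qf A F w" using npos by (simp add: power_divide)
      finally show ?thesis using n2 by (simp add: mult_ac)
    qed
  qed
  define r where "r i = (\<Sum>j\<in>F. A i j * v0 j) - lam * v0 i" for i
  define u where "u i = (if i \<in> F then r i else 0)" for i
  have "2 * (\<Sum>i\<in>F. u i * r i) * t + (qf A F u - lam * (\<Sum>i\<in>F. (u i)^2)) * t^2 \<ge> 0" for t
  proof -
    have "qf A F (\<lambda>i. v0 i + t * u i) \<ge> lam * (\<Sum>i\<in>F. (v0 i + t * u i)^2)"
      by (rule claim1) (simp add: v0out u_def)
    moreover have "(\<Sum>i\<in>F. (v0 i + t * u i)^2) = (\<Sum>i\<in>F. (v0 i)^2) + 2 * t * (\<Sum>i\<in>F. u i * v0 i) + t^2 * (\<Sum>i\<in>F. (u i)^2)"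
      by (simp add: power2_sum sum.distrib sum_distrib_left power_mult_distrib mult_ac)
    moreover have "(\<Sum>i\<in>F. u i * r i) = (\<Sum>i\<in>F. u i * (\<Sum>j\<in>F. A i j * v0 j)) - lam * (\<Sum>i\<in>F. u i * v0 i)"
      by (simp add: r_def right_diff_distrib sum_subtractf sum_distrib_left mult_ac)
    ultimately show ?thesis using qf_expand[of A F v0 t u, OF sym] v01
      by (intro hquad[where l=lam and q="qf A F u" and a="(\<Sum>i\<in>F. u i * (\<Sum>j\<in>F. A i j * v0 j))"
           and b="\<Sum>i\<in>F. u i * v0 i" and c="\<Sum>i\<in>F. (u i)^2"]) (simp_all add: lam_def)
  qed
  hence "2 * (\<Sum>i\<in>F. u i * r i) = 0"
    by (intro quad1[of _ "qf A F u - lam * (\<Sum>i\<in>F. (u i)^2)"]) (simp add: mult.commute)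
  hence "(\<Sum>i\<in>F. (r i)^2) = 0" by (simp add: u_def power2_eq_square)
  hence r0: "\<And>i. i \<in> F \<Longrightarrow> r i = 0" using fin by (simp add: sum_nonneg_eq_0_iff)
  have "sub_eigenvalue A F lam"
    unfolding sub_eigenvalue_def
  proof (intro exI[of _ v0] conjI ballI)
    show "supp v0 \<subseteq> F" using v0out by (auto simp: supp_def)
    show "v0 \<noteq> (\<lambda>_. 0)" using v01 by auto
    fix i assume "i \<in> F" thus "(\<Sum>k\<in>F. A i k * v0 k) = lam * v0 i" using r0[of i] by (simp add: r_def)
  qed
  hence "rho \<le> lam" by (rule eigb)
  moreover have "qf A F v \<ge> lam * (\<Sum>i\<in>F. (v i)^2)" by (rule claim1) (use sv in \<open>auto simp: supp_def\<close>)
  moreover have "(\<Sum>i\<in>F. (v i)^2) \<ge> 0" by (simp add: sum_nonneg)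
  ultimately show ?thesis by (meson mult_right_mono order_trans)
qed

lemma amgm: fixes r x y :: real assumes "r > 0"
  shows "-2*x*y \<le> r/2*x^2 + 2/r*y^2"
proof -
  have "0 \<le> (r*x+2*y)^2" by simp
  hence "0 \<le> r^2*x^2 + 4*r*(x*y) + 4*y^2" by (simp add: power2_eq_square algebra_simps)
  hence "0 \<le> (r^2*x^2 + 4*r*(x*y) + 4*y^2) / (2*r)" using assms by simp
  also have "\<dots> = r/2*x^2 + 2*(x*y) + 2/r*y^2" using assms by (simp add: field_simps power2_eq_square)
  finally show ?thesis by simp
qed

lemma quad_min:
  fixes e :: real and c :: "nat \<Rightarrow> real"
  assumes fin: "finite S" and rpos: "rho > 0"
    and pd: "\<And>v. supp v \<subseteq> S \<Longrightarrow> qf A S v \<ge> rho * (\<Sum>i\<in>S. (v i)^2)"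
  shows "\<exists>b. supp b \<subseteq> S \<and> (\<forall>b'. supp b' \<subseteq> S \<longrightarrow>
            e - 2*(\<Sum>i\<in>S. b i * c i) + qf A S b \<le> e - 2*(\<Sum>i\<in>S. b' i * c i) + qf A S b')"
proof -
  define f where "f b = - 2*(\<Sum>i\<in>S. b i * c i) + qf A S b" for b
  define D where "D = (\<Sum>i\<in>S. (c i)^2)"
  define R where "R = 4*D/rho^2 + 1"
  have D0: "D \<ge> 0" by (simp add: D_def sum_nonneg)
  hence R1: "R \<ge> 1" using rpos by (simp add: R_def)
  define B where "B = PiE UNIV (\<lambda>i. if i \<in> S then {-R..R} else {0::real})"
  have "compact B" unfolding B_def by (rule box_compact)
  moreover have "(\<lambda>_. 0) \<in> B" using R1 by (auto simp: B_def)
  hence "B \<noteq> {}" by auto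
  moreover have "continuous_on B f" unfolding f_def
    by (intro continuous_intros cont_coord qf_cont)
  ultimately obtain b0 where b0B: "b0 \<in> B" and b0min: "\<And>y. y \<in> B \<Longrightarrow> f b0 \<le> f y"
    using continuous_attains_inf[of B f] by blast
  have f00: "f b0 \<le> 0" using b0min[OF \<open>(\<lambda>_. 0) \<in> B\<close>] by (simp add: f_def qf_def)
  have lower: "f b \<ge> rho/2 * (\<Sum>i\<in>S. (b i)^2) - 2/rho * D" if "supp b \<subseteq> S" for b
  proof -
    have "(\<Sum>i\<in>S. -2 * b i * c i) \<ge> (\<Sum>i\<in>S. - (rho/2*(b i)^2 + 2/rho*(c i)^2))"
    proof (rule sum_mono)
      fix i assume "i \<in> S"
      show "- (rho/2*(b i)^2 + 2/rho*(c i)^2) \<le> -2 * b i * c i"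
        using amgm[OF rpos, of "- b i" "c i"] by simp
    qed
    hence "- 2*(\<Sum>i\<in>S. b i * c i) \<ge> - (rho/2 * (\<Sum>i\<in>S. (b i)^2)) - 2/rho * D"
      by (simp add: D_def sum.distrib sum_distrib_left sum_negf mult.assoc sum_subtractf sum_divide_distrib)
    thus ?thesis using pd[OF that] unfolding f_def by linarith
  qed
  show ?thesis
  proof (intro exI[of _ b0] conjI allI impI)
    show "supp b0 \<subseteq> S" using b0B by (auto simp: B_def PiE_iff supp_def split: if_splits)
    fix b' assume sb: "supp b' \<subseteq> S"
    show "e - 2*(\<Sum>i\<in>S. b0 i * c i) + qf A S b0 \<le> e - 2*(\<Sum>i\<in>S. b' i * c i) + qf A S b'"
    proof (cases "b' \<in> B")
      case True then show ?thesis using b0min[of b'] by (simp add: f_def)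
    next
      case False
      then obtain i where iS: "i \<in> S" and big: "\<bar>b' i\<bar> > R"
      proof -
        from False obtain i where "b' i \<notin> (if i \<in> S then {-R..R} else {0})"
          unfolding B_def PiE_iff by auto
        moreover have "i \<in> S" using calculation sb by (auto simp: supp_def split: if_splits)
        ultimately show ?thesis using that by (auto simp: abs_le_iff)
      qed
      have "R^2 < \<bar>b' i\<bar>^2" using big R1 by (intro power_strict_mono) auto
      hence "R^2 < (b' i)^2" by simp
      moreover have "R^2 \<ge> R" using R1 by (simp add: power2_eq_square)
      moreover have "(b' i)^2 \<le> (\<Sum>i\<in>S. (b' i)^2)" using iS fin by (intro member_le_sum) auto
      ultimately have "(\<Sum>i\<in>S. (b' i)^2) > 4*D/rho^2" unfolding R_def by linarith
      hence "rho/2 * (\<Sum>i\<in>S. (b' i)^2) > rho/2 * (4*D/rho^2)" using rpos by (intro mult_strict_left_mono) auto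
      also have "rho/2 * (4*D/rho^2) = 2/rho * D" using rpos by (simp add: power2_eq_square field_simps)
      finally have "f b' > 0" using lower[OF sb] by linarith
      thus ?thesis using f00 by (simp add: f_def)
    qed
  qed
qed



lemma qf_restrict:
  assumes "S \<subseteq> T" "finite T" "\<And>i. i \<notin> S \<Longrightarrow> v i = 0"
  shows "qf A T v = qf A S v"
proof -
  have "qf A T v = (\<Sum>i\<in>S. \<Sum>j\<in>T. v i * A i j * v j)"
    unfolding qf_def using assms by (intro sum.mono_neutral_right) auto
  also have "\<dots> = qf A S v"
    unfolding qf_def using assms by (intro sum.cong refl sum.mono_neutral_right) auto
  finally show ?thesis .
qed

lemma sq_restrict:
  fixes v :: "nat \<Rightarrow> real"
  assumes "S \<subseteq> T" "finite T" "\<And>i. i \<notin> S \<Longrightarrow> v i = 0"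
  shows "(\<Sum>i\<in>T. (v i)^2) = (\<Sum>i\<in>S. (v i)^2)"
  using assms by (intro sum.mono_neutral_right) auto

lemma hquad2: fixes e B Q t C D q :: real
  shows "e - 2*B + Q \<le> e - 2*(B + t*C) + (Q + 2*t*D + t^2*q) \<Longrightarrow> 2*(D - C)*t + q*t^2 \<ge> 0"
  by (simp add: algebra_simps)

lemma noise_orth:
  fixes M :: "'w measure" and X :: "'w \<Rightarrow> nat \<Rightarrow> real" and eps :: "'w \<Rightarrow> real"
  assumes prob: "prob_space M"
    and X_meas: "\<And>i. i < d \<Longrightarrow> (\<lambda>\<omega>. X \<omega> i) \<in> borel_measurable M"
    and eps_meas: "eps \<in> borel_measurable M"
    and noise: "AE \<omega> in M. real_cond_exp M (gen_sigma M d X) eps \<omega> = 0"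
    and i: "i < d"
    and int: "integrable M (\<lambda>\<omega>. X \<omega> i * eps \<omega>)"
  shows "(\<integral>\<omega>. X \<omega> i * eps \<omega> \<partial>M) = 0"
proof -
  interpret P: prob_space M by (rule prob)
  define Gen where "Gen = {{\<omega> \<in> space M. X \<omega> i \<in> B} | i B. i < d \<and> B \<in> sets borel}"
  have GenPow: "Gen \<subseteq> Pow (space M)" by (auto simp: Gen_def)
  have spG: "space (gen_sigma M d X) = space M"
    unfolding gen_sigma_def by (rule space_measure_of_conv)
  have setsG: "sets (gen_sigma M d X) = sigma_sets (space M) Gen"
    unfolding gen_sigma_def Gen_def[symmetric] by (rule sets_measure_of[OF GenPow])
  have "Gen \<subseteq> sets M"
  proof
    fix A assume "A \<in> Gen"
    then obtain j B where A: "A = {\<omega> \<in> space M. X \<omega> j \<in> B}" "j < d" "B \<in> sets borel"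
      unfolding Gen_def by blast
    have "(\<lambda>\<omega>. X \<omega> j) -` B \<inter> space M \<in> sets M"
      using measurable_sets[OF X_meas[OF A(2)] A(3)] .
    moreover have "(\<lambda>\<omega>. X \<omega> j) -` B \<inter> space M = A" using A(1) by auto
    ultimately show "A \<in> sets M" by simp
  qed
  hence "sets (gen_sigma M d X) \<subseteq> sets M" unfolding setsG by (rule sets.sigma_sets_subset)
  hence subalg: "subalgebra M (gen_sigma M d X)" unfolding subalgebra_def using spG by simp
  have "finite_measure_subalgebra M (gen_sigma M d X)"
    unfolding finite_measure_subalgebra_def finite_measure_subalgebra_axioms_def
    using subalg P.finite_measure_axioms by simp
  then interpret SF: sigma_finite_subalgebra M "gen_sigma M d X"
    by (rule finite_measure_subalgebra_is_sigma_finite)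
  have Xmeas: "(\<lambda>\<omega>. X \<omega> i) \<in> borel_measurable (gen_sigma M d X)"
  proof (rule measurableI)
    fix B :: "real set" assume B: "B \<in> sets borel"
    have "(\<lambda>\<omega>. X \<omega> i) -` B \<inter> space (gen_sigma M d X) = {\<omega> \<in> space M. X \<omega> i \<in> B}"
      using spG by auto
    also have "\<dots> \<in> Gen" unfolding Gen_def using i B by blast
    finally show "(\<lambda>\<omega>. X \<omega> i) -` B \<inter> space (gen_sigma M d X) \<in> sets (gen_sigma M d X)"
      unfolding setsG by (rule sigma_sets.Basic)
  qed simp
  have "(\<integral>\<omega>. X \<omega> i * eps \<omega> \<partial>M) = (\<integral>\<omega>. X \<omega> i * real_cond_exp M (gen_sigma M d X) eps \<omega> \<partial>M)"
    using SF.real_cond_exp_intg(2)[OF int Xmeas eps_meas] by simp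
  also have "\<dots> = (\<integral>\<omega>. 0 \<partial>M)"
  proof (rule integral_cong_AE)
    show "(\<lambda>\<omega>. X \<omega> i * real_cond_exp M (gen_sigma M d X) eps \<omega>) \<in> borel_measurable M"
      using X_meas[OF i] borel_measurable_cond_exp2 by (rule borel_measurable_times)
  qed (use noise in auto)
  finally show ?thesis by simp
qed



theorem mainTheorem8:
  fixes M :: "'w measure" and d :: nat and X :: "'w \<Rightarrow> nat \<Rightarrow> real"
    and Y eps :: "'w \<Rightarrow> real" and beta_star :: "nat \<Rightarrow> real"
    and rho L Mx :: real and S :: "nat set"
  assumes prob: "prob_space M"
    and X_meas: "\<And>i. i < d \<Longrightarrow> (\<lambda>\<omega>. X \<omega> i) \<in> borel_measurable M"
    and Y_meas: "Y \<in> borel_measurable M"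
    and beta_dim: "\<And>i. i \<ge> d \<Longrightarrow> beta_star i = 0"
    and mean0: "\<And>i. i < d \<Longrightarrow> (\<integral>\<omega>. X \<omega> i \<partial>M) = 0"
    and model: "\<And>\<omega>. \<omega> \<in> space M \<Longrightarrow> Y \<omega> = inner_d d beta_star (X \<omega>) + eps \<omega>"
    and noise: "AE \<omega> in M. real_cond_exp M (gen_sigma M d X) eps \<omega> = 0"
    and rho_pos: "0 < rho" and rho_L: "rho \<le> L"
    and eig: "\<And>F mu. F \<subseteq> {..<d} \<Longrightarrow> card F = card (supp beta_star) \<Longrightarrow>
               sub_eigenvalue (covx M X) F mu \<Longrightarrow> rho \<le> mu \<and> mu \<le> L"
    and incoh: "\<And>F. F \<subseteq> {..<d} \<Longrightarrow> card F = card (supp beta_star) \<Longrightarrow>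
               mu_F d (covx M X) F < 1"
    and y_bdd: "AE \<omega> in M. \<bar>Y \<omega>\<bar> < 1"
    and x_bdd: "AE \<omega> in M. \<forall>i<d. \<bar>X \<omega> i\<bar> < Mx"
    and S_sub: "S \<subset> supp beta_star"
  shows "Max ((\<lambda>i. \<bar>Zs M d X Y S i\<bar>) ` ({..<d} - S))
           \<ge> sqrt (rho ^ 3 / L) * (1 / sqrt (real (card (supp beta_star)) - real (card S)))
               * norm2_on {..<d} (\<lambda>i. beta_star i - betaS M d X Y S i)
       \<and> sqrt (rho ^ 3 / L) * (1 / sqrt (real (card (supp beta_star)) - real (card S)))
               * norm2_on {..<d} (\<lambda>i. beta_star i - betaS M d X Y S i)
           \<ge> sqrt (rho ^ 3 / L) * (1 / sqrt (real (card (supp beta_star)) - real (card S)))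
               * norm2_on (supp beta_star - S) beta_star"
proof -
  interpret P: prob_space M by (rule prob)
  define Sst where "Sst = supp beta_star"
  define beta where "beta = betaS M d X Y S"
  define G where "G i j = (\<integral>\<omega>. X \<omega> i * X \<omega> j \<partial>M)" for i j
  define c where "c i = (\<integral>\<omega>. X \<omega> i * Y \<omega> \<partial>M)" for i
  define EY2 where "EY2 = (\<integral>\<omega>. (Y \<omega>)^2 \<partial>M)"
  define Z where "Z i = Zs M d X Y S i" for i
  define Dl where "Dl i = beta_star i - beta i" for i
  have Gsym: "\<And>i j. G i j = G j i" by (simp add: G_def mult.commute)
  have Sst_d: "Sst \<subseteq> {..<d}"
  proof
    fix i assume "i \<in> Sst"
    hence "beta_star i \<noteq> 0" by (simp add: Sst_def supp_def)
    thus "i \<in> {..<d}" using beta_dim[of i] by (cases "d \<le> i") auto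
  qed
  have finSst: "finite Sst" using Sst_d finite_subset by blast
  have SsubSst: "S \<subseteq> Sst" using S_sub Sst_def by auto
  have S_d: "\<And>i. i \<in> S \<Longrightarrow> i < d" using SsubSst Sst_d by auto
  have finS: "finite S" using finSst SsubSst finite_subset by blast
  have cardlt: "card S < card Sst" using S_sub finSst by (simp add: Sst_def psubset_card_mono)
  have covG: "\<And>i j. i < d \<Longrightarrow> j < d \<Longrightarrow> covx M X i j = G i j"
    by (simp add: covx_def mean0 G_def)
  have XXm: "\<And>i j. i < d \<Longrightarrow> j < d \<Longrightarrow> (\<lambda>\<omega>. X \<omega> i * X \<omega> j) \<in> borel_measurable M"
    by (intro borel_measurable_times X_meas)
  have intXX: "integrable M (\<lambda>\<omega>. X \<omega> i * X \<omega> j)" if "i < d" "j < d" for i j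
  proof (rule P.integrable_const_bound[where B="Mx*Mx"])
    show "AE \<omega> in M. norm (X \<omega> i * X \<omega> j) \<le> Mx*Mx"
      using x_bdd
    proof eventually_elim
      case (elim \<omega>)
      hence a: "\<bar>X \<omega> i\<bar> < Mx" "\<bar>X \<omega> j\<bar> < Mx" using that by auto
      have "\<bar>X \<omega> i\<bar> * \<bar>X \<omega> j\<bar> \<le> Mx * Mx" by (rule mult_mono) (use a in auto)
      thus ?case by (simp add: abs_mult)
    qed
  qed (rule XXm[OF that])
  have intXY: "integrable M (\<lambda>\<omega>. X \<omega> i * Y \<omega>)" if "i < d" for i
  proof (rule P.integrable_const_bound[where B="Mx*1"])
    show "AE \<omega> in M. norm (X \<omega> i * Y \<omega>) \<le> Mx*1"
      using x_bdd y_bdd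
    proof eventually_elim
      case (elim \<omega>)
      hence a: "\<bar>X \<omega> i\<bar> < Mx" "\<bar>Y \<omega>\<bar> < 1" using that by auto
      have "\<bar>X \<omega> i\<bar> * \<bar>Y \<omega>\<bar> \<le> Mx * 1" by (rule mult_mono) (use a in auto)
      thus ?case by (simp add: abs_mult)
    qed
  qed (intro borel_measurable_times X_meas that Y_meas)
  have intYY: "integrable M (\<lambda>\<omega>. (Y \<omega>)^2)"
  proof (rule P.integrable_const_bound[where B="1"])
    show "AE \<omega> in M. norm ((Y \<omega>)^2) \<le> 1"
      using y_bdd
    proof eventually_elim
      case (elim \<omega>)
      hence "\<bar>Y \<omega>\<bar> * \<bar>Y \<omega>\<bar> \<le> 1 * 1" by (intro mult_mono) auto
      thus ?case by (simp add: power2_eq_square abs_mult)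
    qed
  qed (intro borel_measurable_power Y_meas)
  have in_S: "inner_d d (X \<omega>) b = (\<Sum>j\<in>S. X \<omega> j * b j)" if "supp b \<subseteq> S" for b \<omega>
    unfolding inner_d_def using that S_d by (intro sum.mono_neutral_right) (auto simp: supp_def)
  have risk_eq: "risk M d X Y b = EY2 - 2*(\<Sum>i\<in>S. b i * c i) + qf G S b" if sb: "supp b \<subseteq> S" for b
  proof -
    have pw: "(Y \<omega> - (\<Sum>j\<in>S. X \<omega> j * b j))^2 = (Y \<omega>)^2 + (\<Sum>i\<in>S. (-2 * b i) * (X \<omega> i * Y \<omega>))
          + (\<Sum>i\<in>S. \<Sum>j\<in>S. (b i * b j) * (X \<omega> i * X \<omega> j))" for \<omega>
    proof -
      have "(\<Sum>j\<in>S. X \<omega> j * b j)^2 = (\<Sum>i\<in>S. \<Sum>j\<in>S. (b i * b j) * (X \<omega> i * X \<omega> j))"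
        by (simp add: power2_eq_square sum_product mult_ac)
      moreover have "2 * Y \<omega> * (\<Sum>j\<in>S. X \<omega> j * b j) = - (\<Sum>i\<in>S. (-2 * b i) * (X \<omega> i * Y \<omega>))"
        by (simp add: sum_distrib_left sum_negf mult_ac)
      ultimately show ?thesis by (simp add: power2_diff)
    qed
    have "risk M d X Y b = (\<integral>\<omega>. (Y \<omega>)^2 + (\<Sum>i\<in>S. (-2 * b i) * (X \<omega> i * Y \<omega>))
          + (\<Sum>i\<in>S. \<Sum>j\<in>S. (b i * b j) * (X \<omega> i * X \<omega> j)) \<partial>M)"
      unfolding risk_def in_S[OF sb] pw ..
    also have "\<dots> = EY2 + (\<Sum>i\<in>S. (-2 * b i) * c i) + (\<Sum>i\<in>S. \<Sum>j\<in>S. (b i * b j) * G i j)"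
      using intXX intXY intYY S_d by (simp add: EY2_def c_def G_def)
    also have "\<dots> = EY2 - 2*(\<Sum>i\<in>S. b i * c i) + qf G S b"
      by (simp add: qf_def sum_distrib_left sum_negf mult_ac)
    finally show ?thesis .
  qed
  have eps_eq: "\<And>\<omega>. \<omega> \<in> space M \<Longrightarrow> eps \<omega> = Y \<omega> - (\<Sum>j<d. beta_star j * X \<omega> j)"
    using model by (simp add: inner_d_def)
  have eps_meas: "eps \<in> borel_measurable M"
  proof -
    have "(\<lambda>\<omega>. Y \<omega> - (\<Sum>j<d. beta_star j * X \<omega> j)) \<in> borel_measurable M"
      using Y_meas X_meas by (intro borel_measurable_diff borel_measurable_sum borel_measurable_times) auto
    thus ?thesis using measurable_cong[where f=eps and g="\<lambda>\<omega>. Y \<omega> - (\<Sum>j<d. beta_star j * X \<omega> j)" and M=M and M'=borel] eps_eq by blast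
  qed
  have intXe: "integrable M (\<lambda>\<omega>. X \<omega> i * eps \<omega>)" if i: "i < d" for i
  proof -
    have "integrable M (\<lambda>\<omega>. X \<omega> i * Y \<omega> - (\<Sum>j<d. beta_star j * (X \<omega> i * X \<omega> j)))"
    proof (rule Bochner_Integration.integrable_diff[OF intXY[OF i]])
      show "integrable M (\<lambda>\<omega>. \<Sum>j<d. beta_star j * (X \<omega> i * X \<omega> j))"
        by (rule Bochner_Integration.integrable_sum, rule Bochner_Integration.integrable_mult_right, rule intXX) (use i in auto)
    qed
    moreover have "integrable M (\<lambda>\<omega>. X \<omega> i * eps \<omega>) \<longleftrightarrow> integrable M (\<lambda>\<omega>. X \<omega> i * Y \<omega> - (\<Sum>j<d. beta_star j * (X \<omega> i * X \<omega> j)))"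
    proof (rule Bochner_Integration.integrable_cong[OF refl])
      fix \<omega> assume "\<omega> \<in> space M"
      thus "X \<omega> i * eps \<omega> = X \<omega> i * Y \<omega> - (\<Sum>j<d. beta_star j * (X \<omega> i * X \<omega> j))"
        using eps_eq by (simp add: right_diff_distrib sum_distrib_left mult_ac)
    qed
    ultimately show ?thesis by simp
  qed
  have Xe0: "(\<integral>\<omega>. X \<omega> i * eps \<omega> \<partial>M) = 0" if i: "i < d" for i
    by (rule noise_orth[OF prob X_meas eps_meas noise i intXe[OF i]])
  have pdSst: "qf G Sst v \<ge> rho * (\<Sum>i\<in>Sst. (v i)^2)" if "supp v \<subseteq> Sst" for v
  proof (rule rayleigh[OF finSst Gsym _ that])
    fix mu assume "sub_eigenvalue G Sst mu"
    then obtain w where w: "supp w \<subseteq> Sst" "w \<noteq> (\<lambda>_. 0)" "\<forall>i\<in>Sst. (\<Sum>k\<in>Sst. G i k * w k) = mu * w i"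
      unfolding sub_eigenvalue_def by blast
    have "sub_eigenvalue (covx M X) Sst mu"
      unfolding sub_eigenvalue_def
    proof (intro exI[of _ w] conjI ballI)
      fix i assume i: "i \<in> Sst"
      have "(\<Sum>k\<in>Sst. covx M X i k * w k) = (\<Sum>k\<in>Sst. G i k * w k)"
        using i Sst_d covG by (intro sum.cong) auto
      thus "(\<Sum>k\<in>Sst. covx M X i k * w k) = mu * w i" using w(3) i by simp
    qed (use w in auto)
    thus "rho \<le> mu" using eig[OF Sst_d] by (simp add: Sst_def)
  qed
  have pdS: "qf G S v \<ge> rho * (\<Sum>i\<in>S. (v i)^2)" if sv: "supp v \<subseteq> S" for v
  proof -
    have out: "\<And>i. i \<notin> S \<Longrightarrow> v i = 0" using sv by (auto simp: supp_def)
    have "qf G Sst v = qf G S v" by (rule qf_restrict[OF SsubSst finSst out])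
    moreover have "(\<Sum>i\<in>Sst. (v i)^2) = (\<Sum>i\<in>S. (v i)^2)" by (rule sq_restrict[OF SsubSst finSst out])
    ultimately show ?thesis using pdSst[of v] sv SsubSst by auto
  qed
  obtain b0 where b0: "supp b0 \<subseteq> S" "\<And>b'. supp b' \<subseteq> S \<Longrightarrow>
      EY2 - 2*(\<Sum>i\<in>S. b0 i * c i) + qf G S b0 \<le> EY2 - 2*(\<Sum>i\<in>S. b' i * c i) + qf G S b'"
    using quad_min[OF finS rho_pos pdS, of EY2 c] by blast
  have "is_arg_min (risk M d X Y) (\<lambda>b. supp b \<subseteq> S) b0"
    unfolding is_arg_min_def using b0 risk_eq by (auto simp: not_less)
  hence "is_arg_min (risk M d X Y) (\<lambda>b. supp b \<subseteq> S) beta"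
    unfolding beta_def betaS_def arg_min_def by (rule someI[where P="is_arg_min (risk M d X Y) (\<lambda>b. supp b \<subseteq> S)"])
  hence beta_supp: "supp beta \<subseteq> S" and beta_min: "\<And>b. supp b \<subseteq> S \<Longrightarrow> risk M d X Y beta \<le> risk M d X Y b"
    unfolding is_arg_min_def by (auto simp: not_less)
  have beta_out: "\<And>i. i \<notin> S \<Longrightarrow> beta i = 0" using beta_supp by (auto simp: supp_def)
  have Dl_out: "\<And>i. i \<notin> Sst \<Longrightarrow> Dl i = 0"
    using beta_out SsubSst by (auto simp: Dl_def Sst_def supp_def)
  have Z_c: "Z i = c i - (\<Sum>j\<in>S. G i j * beta j)" if i: "i < d" for i
  proof -
    have "Z i = (\<integral>\<omega>. X \<omega> i * Y \<omega> - (\<Sum>j\<in>S. beta j * (X \<omega> i * X \<omega> j)) \<partial>M)"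
      unfolding Z_def Zs_def beta_def[symmetric] in_S[OF beta_supp]
      by (simp add: right_diff_distrib sum_distrib_left mult_ac)
    also have "\<dots> = c i - (\<Sum>j\<in>S. beta j * G i j)"
      using intXX intXY i S_d by (simp add: c_def G_def)
    finally show ?thesis by (simp add: mult.commute)
  qed
  have Z_D: "Z i = (\<Sum>j<d. G i j * Dl j)" if i: "i < d" for i
  proof -
    have "Z i = (\<integral>\<omega>. (\<Sum>j<d. Dl j * (X \<omega> i * X \<omega> j)) + X \<omega> i * eps \<omega> \<partial>M)"
      unfolding Z_def Zs_def beta_def[symmetric]
    proof (rule Bochner_Integration.integral_cong[OF refl])
      fix \<omega> assume "\<omega> \<in> space M"
      hence "Y \<omega> - inner_d d (X \<omega>) beta = (\<Sum>j<d. Dl j * X \<omega> j) + eps \<omega>"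
      proof -
        have e: "eps \<omega> = Y \<omega> - (\<Sum>j<d. beta_star j * X \<omega> j)" using eps_eq \<open>\<omega> \<in> space M\<close> by blast
        have s: "(\<Sum>j<d. Dl j * X \<omega> j) = (\<Sum>j<d. beta_star j * X \<omega> j) - (\<Sum>j<d. X \<omega> j * beta j)"
          by (simp add: Dl_def algebra_simps sum_subtractf)
        show ?thesis unfolding inner_d_def e s by simp
      qed
      thus "X \<omega> i * (Y \<omega> - inner_d d (X \<omega>) beta) = (\<Sum>j<d. Dl j * (X \<omega> i * X \<omega> j)) + X \<omega> i * eps \<omega>"
        by (simp add: distrib_left sum_distrib_left mult_ac)
    qed
    also have "\<dots> = (\<Sum>j<d. Dl j * G i j)"
    proof -
      have I: "integrable M (\<lambda>\<omega>. \<Sum>j<d. Dl j * (X \<omega> i * X \<omega> j))"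
        by (rule Bochner_Integration.integrable_sum, rule Bochner_Integration.integrable_mult_right, rule intXX) (use i in auto)
      have "(\<integral>\<omega>. (\<Sum>j<d. Dl j * (X \<omega> i * X \<omega> j)) + X \<omega> i * eps \<omega> \<partial>M)
          = (\<integral>\<omega>. (\<Sum>j<d. Dl j * (X \<omega> i * X \<omega> j)) \<partial>M)"
        using I intXe[OF i] Xe0[OF i] by simp
      also have "\<dots> = (\<Sum>j<d. Dl j * G i j)"
        by (subst Bochner_Integration.integral_sum) (use intXX i in \<open>auto simp: G_def\<close>)
      finally show ?thesis .
    qed
    finally show ?thesis by (simp add: mult.commute)
  qed
  define u where "u i = (if i \<in> S then Dl i else 0)" for i
  have su: "supp (\<lambda>i. beta i + t * u i) \<subseteq> S" for t using beta_out by (auto simp: supp_def u_def)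
  define K where "K = (\<Sum>i\<in>S. u i * (\<Sum>j\<in>S. G i j * beta j)) - (\<Sum>i\<in>S. u i * c i)"
  have "2*K*t + qf G S u * t^2 \<ge> 0" for t
  proof -
    have "risk M d X Y beta \<le> risk M d X Y (\<lambda>i. beta i + t*u i)" by (rule beta_min[OF su])
    hence "EY2 - 2*(\<Sum>i\<in>S. beta i * c i) + qf G S beta \<le> EY2 - 2*(\<Sum>i\<in>S. (beta i + t*u i) * c i) + qf G S (\<lambda>i. beta i + t*u i)"
      using risk_eq[OF beta_supp] risk_eq[OF su] by simp
    moreover have "(\<Sum>i\<in>S. (beta i + t*u i) * c i) = (\<Sum>i\<in>S. beta i * c i) + t * (\<Sum>i\<in>S. u i * c i)"
      by (simp add: distrib_right sum.distrib sum_distrib_left mult.assoc)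
    ultimately show ?thesis unfolding K_def using qf_expand[of G S beta t u, OF Gsym]
      by (intro hquad2) simp_all
  qed
  hence "2*K = 0" by (intro quad1[of _ "qf G S u"]) (simp add: mult.commute)
  hence K0: "K = 0" by simp
  have sumSZ: "(\<Sum>i\<in>S. Dl i * Z i) = 0"
  proof -
    have "(\<Sum>i\<in>S. Dl i * Z i) = (\<Sum>i\<in>S. u i * c i - u i * (\<Sum>j\<in>S. G i j * beta j))"
      using Z_c S_d by (intro sum.cong) (auto simp: u_def right_diff_distrib)
    also have "\<dots> = - K" by (simp add: K_def sum_subtractf)
    finally show ?thesis using K0 by simp
  qed
  have suppDl: "supp Dl \<subseteq> Sst" using Dl_out by (auto simp: supp_def)
  have Zst: "(\<Sum>i\<in>Sst. Dl i * Z i) = qf G Sst Dl"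
  proof -
    have "(\<Sum>i\<in>Sst. Dl i * Z i) = (\<Sum>i\<in>Sst. Dl i * (\<Sum>j\<in>Sst. G i j * Dl j))"
    proof (intro sum.cong refl)
      fix i assume i: "i \<in> Sst"
      have "Z i = (\<Sum>j<d. G i j * Dl j)" using Z_D i Sst_d by auto
      also have "\<dots> = (\<Sum>j\<in>Sst. G i j * Dl j)"
        using Sst_d Dl_out by (intro sum.mono_neutral_right) auto
      finally show "Dl i * Z i = Dl i * (\<Sum>j\<in>Sst. G i j * Dl j)" by simp
    qed
    also have "\<dots> = qf G Sst Dl" by (simp add: qf_def sum_distrib_left mult_ac)
    finally show ?thesis .
  qed
  define A' where "A' = Sst - S"
  have finA: "finite A'" using finSst by (simp add: A'_def)
  have splitS: "(\<Sum>i\<in>Sst. Dl i * Z i) = (\<Sum>i\<in>A'. Dl i * Z i) + (\<Sum>i\<in>S. Dl i * Z i)"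
    unfolding A'_def by (rule sum.subset_diff[OF SsubSst finSst])
  have cardA: "real (card Sst) - real (card S) = real (card A')"
    using card_Diff_subset[OF finS SsubSst] cardlt by (simp add: A'_def of_nat_diff)
  have cardpos: "card A' > 0" using cardlt card_Diff_subset[OF finS SsubSst] by (simp add: A'_def)
  define Zmax where "Zmax = Max ((\<lambda>i. \<bar>Zs M d X Y S i\<bar>) ` ({..<d} - S))"
  have A'sub: "A' \<subseteq> {..<d} - S" using Sst_d by (auto simp: A'_def)
  have Zle: "\<bar>Z i\<bar> \<le> Zmax" if "i \<in> A'" for i
    unfolding Zmax_def Z_def using that A'sub by (intro Max_ge) auto
  obtain i0 where "i0 \<in> A'" using cardpos by (metis card_gt_0_iff ex_in_conv)
  hence Zmax0: "Zmax \<ge> 0" using Zle[of i0] by linarith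
  define nD where "nD = norm2_on {..<d} Dl"
  have sqD: "(\<Sum>i<d. (Dl i)^2) = (\<Sum>i\<in>Sst. (Dl i)^2)" by (rule sq_restrict[OF Sst_d]) (use Dl_out in auto)
  have "0 \<le> (\<Sum>i<d. (Dl i)^2)" by (intro sum_nonneg) auto
  hence "nD^2 = (\<Sum>i<d. (Dl i)^2)" unfolding nD_def norm2_on_def by (rule real_sqrt_pow2)
  hence nD2: "nD^2 = (\<Sum>i\<in>Sst. (Dl i)^2)" using sqD by simp
  have nD0: "nD \<ge> 0" unfolding nD_def norm2_on_def by (intro real_sqrt_ge_zero sum_nonneg) auto
  have L2D: "L2_set Dl A' \<le> nD"
    unfolding L2_set_def nD_def norm2_on_def sqD A'_def
    by (intro real_sqrt_le_mono sum_mono2 finSst) auto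
  have L2Z: "L2_set Z A' \<le> sqrt (real (card A')) * Zmax"
  proof -
    have "(\<Sum>i\<in>A'. (Z i)^2) \<le> (\<Sum>i\<in>A'. Zmax^2)"
    proof (rule sum_mono)
      fix i assume "i \<in> A'"
      hence "\<bar>Z i\<bar>^2 \<le> Zmax^2" using Zle by (intro power_mono) auto
      thus "(Z i)^2 \<le> Zmax^2" by simp
    qed
    hence "L2_set Z A' \<le> sqrt (real (card A') * Zmax^2)" unfolding L2_set_def by simp
    also have "\<dots> = sqrt (real (card A')) * Zmax" using Zmax0 by (simp add: real_sqrt_mult)
    finally show ?thesis .
  qed
  have "rho * nD^2 \<le> nD * (sqrt (real (card A')) * Zmax)"
  proof -
    have "rho * nD^2 \<le> qf G Sst Dl" using pdSst[OF suppDl] nD2 by simp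
    also have "\<dots> = (\<Sum>i\<in>A'. Dl i * Z i)" using Zst splitS sumSZ by simp
    also have "\<dots> \<le> (\<Sum>i\<in>A'. \<bar>Dl i\<bar> * \<bar>Z i\<bar>)" by (intro sum_mono) (simp add: abs_mult[symmetric])
    also have "\<dots> \<le> L2_set Dl A' * L2_set Z A'" by (rule L2_set_mult_ineq)
    also have "\<dots> \<le> nD * (sqrt (real (card A')) * Zmax)"
      by (intro mult_mono L2D L2Z) (auto simp: Zmax0 nD0)
    finally show ?thesis .
  qed
  have coef: "sqrt (rho ^ 3 / L) \<le> rho"
  proof -
    have Lpos: "L > 0" using rho_pos rho_L by linarith
    have "rho ^ 3 / L \<le> rho^2"
      using rho_pos rho_L Lpos by (simp add: divide_le_eq power3_eq_cube power2_eq_square mult_left_mono)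
    hence "sqrt (rho ^ 3 / L) \<le> sqrt (rho^2)" by (rule real_sqrt_le_mono)
    thus ?thesis using rho_pos by simp
  qed
  have sqm: "sqrt (real (card A')) > 0" using cardpos by simp
  have main1: "sqrt (rho ^ 3 / L) * (1 / sqrt (real (card Sst) - real (card S))) * nD \<le> Zmax"
  proof (cases "nD = 0")
    case True then show ?thesis using Zmax0 by simp
  next
    case False
    hence npos: "nD > 0" using nD0 by simp
    have "rho * nD \<le> sqrt (real (card A')) * Zmax"
      using \<open>rho * nD^2 \<le> nD * (sqrt (real (card A')) * Zmax)\<close> npos
      by (simp add: power2_eq_square mult.assoc mult.left_commute[of rho])
    have "sqrt (rho ^ 3 / L) * (1 / sqrt (real (card A'))) * nD \<le> rho * (1 / sqrt (real (card A'))) * nD"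
      using coef sqm npos by (intro mult_right_mono) auto
    also have "\<dots> = (rho * nD) / sqrt (real (card A'))" by simp
    also have "\<dots> \<le> Zmax" using \<open>rho * nD \<le> sqrt (real (card A')) * Zmax\<close> sqm
      by (simp add: divide_le_eq mult.commute)
    finally show ?thesis unfolding cardA .
  qed
  have main2: "norm2_on (Sst - S) beta_star \<le> nD"
  proof -
    have "norm2_on (Sst - S) beta_star = L2_set Dl A'"
      unfolding norm2_on_def L2_set_def A'_def
      by (intro arg_cong[where f=sqrt] sum.cong refl) (simp add: Dl_def beta_out)
    thus ?thesis using L2D by simp
  qed
  have coef0: "sqrt (rho ^ 3 / L) * (1 / sqrt (real (card Sst) - real (card S))) \<ge> 0"
    using rho_pos rho_L cardlt by simp
  have DlE: "Dl = (\<lambda>i. beta_star i - betaS M d X Y S i)" by (simp add: fun_eq_iff Dl_def beta_def)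
  show ?thesis
    using main1 mult_left_mono[OF main2 coef0]
    unfolding Zmax_def nD_def Sst_def DlE by simp
qed

end
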